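(* Let $(X,(\cdot,\cdot|\cdot))$ be a 2-inner product space over $\mathbb{K}\in\{\mathbb{R},\mathbb{C}\}$, let $n$ be a positive integer, and let $x,y_1,\dots,y_n,z\in X$. Then \[ \sum_{i=1}^{n}\left|(x,y_i|z)\right|^2\le \|x|z\|^2\left\{\max_{1\le i\le n}\|y_i|z\|^2+(n-1)\max_{1\le i\ne j\le n}\left|(y_i,y_j|z)\right|\right\}. \]
   Context: A 2-inner product on a linear space $X$ of dimension greater than $1$ over $\mathbb{K}$ ($\mathbb{K}=\mathbb{R}$ or $\mathbb{C}$) is a function $(\cdot,\cdot|\cdot):X\times X\times X\to\mathbb{K}$ such that for all $x,x',y,z\in X$ and $\alpha\in\mathbb{K}$: (i) $(x,x|z)\ge 0$, and $(x,x|z)=0$ iff $x$ and $z$ are linearly dependent; (ii) $(x,x|z)=(z,z|x)$; (iii) $(y,x|z)=\overline{(x,y|z)}$; (iv) $(\alpha x,y|z)=\alpha(x,y|z)$; (v) $(x+x',y|z)=(x,y|z)+(x',y|z)$. The associated 2-norm is $\|x|z\|=\sqrt{(x,x|z)}$. The maximum $\max_{1\le i\ne j\le n}$ is over all pairs $(i,j)$ with $i\ne j$. *)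

theory Defs
  imports Complex_Main
begin

text \<open>K is real (conjugation = id) or complex (conjugation = cnj).\<close>

definition lin_dep :: "('k::field \<Rightarrow> 'v::ab_group_add \<Rightarrow> 'v) \<Rightarrow> 'v \<Rightarrow> 'v \<Rightarrow> bool" where
  "lin_dep scale x z \<longleftrightarrow> (\<exists>a b. (a \<noteq> 0 \<or> b \<noteq> 0) \<and> scale a x + scale b z = 0)"

text \<open>2-inner product on the linear space (X, scale) of dimension > 1, with
  conjugation cj on the scalars.\<close>
definition is_2ip ::
  "('k::real_normed_field \<Rightarrow> 'v::ab_group_add \<Rightarrow> 'v) \<Rightarrow> ('k \<Rightarrow> 'k) \<Rightarrow> ('v \<Rightarrow> 'v \<Rightarrow> 'v \<Rightarrow> 'k) \<Rightarrow> bool" where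
  "is_2ip scale cj ip \<longleftrightarrow>
     vector_space scale \<and>
     (\<exists>u v. \<not> lin_dep scale u v) \<and>
     (\<forall>x z. \<exists>r::real. r \<ge> 0 \<and> ip x x z = of_real r) \<and>
     (\<forall>x z. ip x x z = 0 \<longleftrightarrow> lin_dep scale x z) \<and>
     (\<forall>x z. ip x x z = ip z z x) \<and>
     (\<forall>x y z. ip y x z = cj (ip x y z)) \<and>
     (\<forall>a x y z. ip (scale a x) y z = a * ip x y z) \<and>
     (\<forall>x x' y z. ip (x + x') y z = ip x y z + ip x' y z)"

definition two_norm :: "('v \<Rightarrow> 'v \<Rightarrow> 'v \<Rightarrow> 'k::real_normed_field) \<Rightarrow> 'v \<Rightarrow> 'v \<Rightarrow> real" where
  "two_norm ip x z = sqrt (norm (ip x x z))"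

end

theory Submission
  imports Defs
begin

lemma generic:
  fixes p :: "'v::ab_group_add \<Rightarrow> 'v \<Rightarrow> 'k::real_normed_field"
    and scale :: "'k \<Rightarrow> 'v \<Rightarrow> 'v" and cj :: "'k \<Rightarrow> 'k"
  assumes add: "\<And>x x' y. p (x + x') y = p x y + p x' y"
    and smul: "\<And>a x y. p (scale a x) y = a * p x y"
    and sym: "\<And>x y. p y x = cj (p x y)"
    and pos: "\<And>x. \<exists>r. r \<ge> 0 \<and> p x x = of_real r"
    and cj_add: "\<And>a b. cj (a + b) = cj a + cj b"
    and cj_mult: "\<And>a b. cj (a * b) = cj a * cj b"
    and cj_cj: "\<And>a. cj (cj a) = a"
    and cj_of_real: "\<And>r. cj (of_real r) = of_real r"
    and cj_norm: "\<And>a. norm (cj a) = norm a"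
    and mult_cj: "\<And>a. a * cj a = of_real ((norm a)\<^sup>2)"
    and fin: "finite A" and ne: "A \<noteq> {}"
    and M1: "\<And>i. i \<in> A \<Longrightarrow> norm (p (y i) (y i)) \<le> M1"
    and M2: "\<And>i j. i \<in> A \<Longrightarrow> j \<in> A \<Longrightarrow> i \<noteq> j \<Longrightarrow> norm (p (y i) (y j)) \<le> M2"
    and Kdef: "K = M1 + real (card A - 1) * M2"
    and K0: "K \<ge> 0"
  shows "(\<Sum>i\<in>A. (norm (p x (y i)))\<^sup>2) \<le> norm (p x x) * K"
proof -
  have p0: "p 0 v = 0" for v using add[of 0 0 v] by simp
  have pdiff: "p (u - v) t = p u t - p v t" for u v t
    using add[of "u - v" v t] by (simp add: algebra_simps)
  have psum1: "p (sum f B) t = (\<Sum>i\<in>B. p (f i) t)" for f :: "'i \<Rightarrow> 'v" and B t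
    by (induct B rule: infinite_finite_induct) (auto simp: p0 add)
  have cj0: "cj 0 = 0" using cj_of_real[of 0] by simp
  have padd2: "p t (u + v) = p t u + p t v" for t u v
    by (metis sym add cj_add)
  have psmul2: "p t (scale a u) = cj a * p t u" for t a u
    by (metis sym smul cj_mult cj_cj)
  have pdiff2: "p t (u - v) = p t u - p t v" for u v t
    using padd2[of t "u - v" v] by (simp add: algebra_simps)
  have p02: "p t 0 = 0" for t by (metis sym p0 cj0)
  have psum2: "p t (sum f B) = (\<Sum>i\<in>B. p t (f i))" for f :: "'i \<Rightarrow> 'v" and B t
    by (induct B rule: infinite_finite_induct) (auto simp: p02 padd2)
  define c where "c i = p x (y i)" for i
  define S where "S = (\<Sum>i\<in>A. (norm (c i))\<^sup>2)"
  define w where "w = (\<Sum>i\<in>A. scale (c i) (y i))"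
  have pxw: "p x w = of_real S"
  proof -
    have "p x w = (\<Sum>i\<in>A. cj (c i) * c i)" unfolding w_def psum2 psmul2 c_def ..
    also have "\<dots> = (\<Sum>i\<in>A. of_real ((norm (c i))\<^sup>2))"
      by (intro sum.cong refl) (metis mult.commute mult_cj)
    finally show ?thesis unfolding S_def by simp
  qed
  have pwx: "p w x = of_real S" by (metis sym pxw cj_of_real)
  have pww: "p w w = (\<Sum>i\<in>A. cj (c i) * (\<Sum>j\<in>A. c j * p (y j) (y i)))"
    unfolding w_def psum1 smul psum2 psmul2 ..
  obtain W where W0: "W \<ge> 0" and W: "p w w = of_real W" using pos by blast
  obtain X where X0: "X \<ge> 0" and X: "p x x = of_real X" using pos by blast
  have nX: "norm (p x x) = X" using X X0 by simp
  have S0: "S \<ge> 0" unfolding S_def by (simp add: sum_nonneg)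
  define a where "a i = norm (c i)" for i
  define b where "b i j = norm (p (y i) (y j))" for i j
  have a0: "a i \<ge> 0" for i unfolding a_def by simp
  have b0: "b i j \<ge> 0" for i j unfolding b_def by simp
  have Wle1: "W \<le> (\<Sum>i\<in>A. \<Sum>j\<in>A. a i * a j * b i j)"
  proof -
    have "W = norm (p w w)" using W W0 by simp
    also have "\<dots> \<le> (\<Sum>i\<in>A. norm (cj (c i) * (\<Sum>j\<in>A. c j * p (y j) (y i))))"
      unfolding pww by (rule norm_sum)
    also have "\<dots> \<le> (\<Sum>i\<in>A. \<Sum>j\<in>A. a i * a j * b j i)"
    proof (intro sum_mono)
      fix i assume "i \<in> A"
      have "norm (cj (c i) * (\<Sum>j\<in>A. c j * p (y j) (y i))) = a i * norm (\<Sum>j\<in>A. c j * p (y j) (y i))"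
        by (simp add: a_def norm_mult cj_norm)
      also have "\<dots> \<le> a i * (\<Sum>j\<in>A. a j * b j i)"
        apply (intro mult_left_mono a0)
        apply (rule order_trans[OF norm_sum])
        apply (intro sum_mono)
        by (simp add: norm_mult a_def b_def)
      finally show "norm (cj (c i) * (\<Sum>j\<in>A. c j * p (y j) (y i))) \<le> (\<Sum>j\<in>A. a i * a j * b j i)"
        by (simp add: sum_distrib_left mult.assoc)
    qed
    also have "\<dots> = (\<Sum>i\<in>A. \<Sum>j\<in>A. a i * a j * b i j)"
      by (subst sum.swap) (simp add: mult.commute mult.left_commute)
    finally show ?thesis .
  qed
  have Sa: "S = (\<Sum>i\<in>A. (a i)\<^sup>2)" unfolding S_def a_def ..
  have inner: "(\<Sum>j\<in>A. a i * a j * b i j) \<le> (a i)\<^sup>2 * M1 + (\<Sum>j\<in>A-{i}. M2 / 2 * ((a i)\<^sup>2 + (a j)\<^sup>2))"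
    if i: "i \<in> A" for i
  proof -
    have "(\<Sum>j\<in>A. a i * a j * b i j) = a i * a i * b i i + (\<Sum>j\<in>A-{i}. a i * a j * b i j)"
      using sum.remove[OF fin i] by simp
    also have "\<dots> \<le> (a i)\<^sup>2 * M1 + (\<Sum>j\<in>A-{i}. M2 / 2 * ((a i)\<^sup>2 + (a j)\<^sup>2))"
    proof (intro add_mono sum_mono)
      show "a i * a i * b i i \<le> (a i)\<^sup>2 * M1"
        using M1[OF i] by (simp add: power2_eq_square b_def mult_left_mono a0)
    next
      fix j assume j: "j \<in> A - {i}"
      have bj: "b i j \<le> M2" using M2[OF i] j b_def by auto
      have "a i * a j * b i j \<le> a i * a j * M2" by (intro mult_left_mono bj) (simp add: a0)
      also have "\<dots> \<le> M2 / 2 * ((a i)\<^sup>2 + (a j)\<^sup>2)"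
      proof -
        have "2 * (a i * a j) \<le> (a i)\<^sup>2 + (a j)\<^sup>2"
          using zero_le_power2[of "a i - a j"] unfolding power2_diff by (simp add: algebra_simps)
        moreover have "M2 \<ge> 0" using bj b0 order_trans by blast
        ultimately have "M2 / 2 * (2 * (a i * a j)) \<le> M2 / 2 * ((a i)\<^sup>2 + (a j)\<^sup>2)"
          by (intro mult_left_mono) auto
        moreover have "M2 / 2 * (2 * (a i * a j)) = a i * a j * M2" by simp
        ultimately show ?thesis by linarith
      qed
      finally show "a i * a j * b i j \<le> M2 / 2 * ((a i)\<^sup>2 + (a j)\<^sup>2)" .
    qed
    finally show ?thesis .
  qed
  have Wle2: "W \<le> S * K"
  proof -
    have "W \<le> (\<Sum>i\<in>A. (a i)\<^sup>2 * M1 + (\<Sum>j\<in>A-{i}. M2 / 2 * ((a i)\<^sup>2 + (a j)\<^sup>2)))"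
      using Wle1 sum_mono[of A _ _, OF inner] by (meson order_trans)
    also have "\<dots> = S * M1 + M2 / 2 * (\<Sum>i\<in>A. (\<Sum>j\<in>A-{i}. (a i)\<^sup>2 + (a j)\<^sup>2))"
    proof -
      have "(\<Sum>i\<in>A. (a i)\<^sup>2 * M1 + (\<Sum>j\<in>A-{i}. M2 / 2 * ((a i)\<^sup>2 + (a j)\<^sup>2)))
         = (\<Sum>i\<in>A. (a i)\<^sup>2 * M1) + (\<Sum>i\<in>A. (\<Sum>j\<in>A-{i}. M2 / 2 * ((a i)\<^sup>2 + (a j)\<^sup>2)))"
        by (rule sum.distrib)
      also have "(\<Sum>i\<in>A. (a i)\<^sup>2 * M1) = S * M1" unfolding Sa by (rule sum_distrib_right[symmetric])
      also have "(\<Sum>i\<in>A. (\<Sum>j\<in>A-{i}. M2 / 2 * ((a i)\<^sup>2 + (a j)\<^sup>2)))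
          = M2 / 2 * (\<Sum>i\<in>A. (\<Sum>j\<in>A-{i}. (a i)\<^sup>2 + (a j)\<^sup>2))"
        by (simp only: sum_distrib_left)
      finally show ?thesis .
    qed
    also have "(\<Sum>i\<in>A. (\<Sum>j\<in>A-{i}. (a i)\<^sup>2 + (a j)\<^sup>2)) = (\<Sum>i\<in>A. (real (card A) - 1) * (a i)\<^sup>2 + (S - (a i)\<^sup>2))"
    proof (intro sum.cong refl)
      fix i assume i: "i \<in> A"
      have "(\<Sum>j\<in>A-{i}. (a j)\<^sup>2) = S - (a i)\<^sup>2" using sum_diff1[of A "\<lambda>j. (a j)\<^sup>2" i] fin i Sa by simp
      moreover have "card (A - {i}) = card A - 1" using i fin by simp
      moreover have "card A \<ge> 1" using fin ne by (simp add: Suc_leI card_gt_0_iff)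
      ultimately show "(\<Sum>j\<in>A-{i}. (a i)\<^sup>2 + (a j)\<^sup>2) = (real (card A) - 1) * (a i)\<^sup>2 + (S - (a i)\<^sup>2)"
        by (simp add: sum.distrib of_nat_diff)
    qed
    also have "\<dots> = 2 * (real (card A) - 1) * S"
    proof -
      have "(\<Sum>i\<in>A. (real (card A) - 1) * (a i)\<^sup>2 + (S - (a i)\<^sup>2))
          = (real (card A) - 1) * (\<Sum>i\<in>A. (a i)\<^sup>2) + (real (card A) * S - (\<Sum>i\<in>A. (a i)\<^sup>2))"
        by (simp only: sum.distrib sum_subtractf sum_distrib_left[symmetric] sum_constant)
      thus ?thesis unfolding Sa[symmetric] by (simp add: algebra_simps)
    qed
    finally have "W \<le> S * M1 + M2 / 2 * (2 * (real (card A) - 1) * S)" .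
    moreover have "M2 / 2 * (2 * (real (card A) - 1) * S) = M2 * (real (card A) - 1) * S" by simp
    ultimately have "W \<le> S * M1 + M2 * (real (card A) - 1) * S" by linarith
    moreover have "real (card A - 1) = real (card A) - 1"
      using fin ne by (simp add: Suc_leI card_gt_0_iff of_nat_diff)
    ultimately show ?thesis unfolding Kdef by (simp add: algebra_simps)
  qed
  have quad: "0 \<le> X - 2 * t * S + t\<^sup>2 * W" for t :: real
  proof -
    define u where "u = x - scale (of_real t) w"
    have "p u u = p x u - of_real t * p w u" unfolding u_def pdiff smul by simp
    also have "\<dots> = of_real (X - 2 * t * S + t\<^sup>2 * W)"
      unfolding u_def pdiff2 psmul2 cj_of_real X pxw pwx W
      by (simp add: algebra_simps power2_eq_square)
    finally have e: "p u u = of_real (X - 2 * t * S + t\<^sup>2 * W)" .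
    obtain r where r: "r \<ge> 0" "p u u = of_real r" using pos by blast
    have "r = X - 2 * t * S + t\<^sup>2 * W" using r(2) e of_real_eq_iff by metis
    with r(1) show ?thesis by simp
  qed
  have "S \<le> X * K"
  proof (cases "K > 0")
    case True
    have "0 \<le> X - 2 * (1/K) * S + (1/K)\<^sup>2 * W" by (rule quad)
    also have "\<dots> \<le> X - 2 * (1/K) * S + (1/K)\<^sup>2 * (S * K)"
      using Wle2 by (intro add_left_mono mult_left_mono) auto
    also have "\<dots> = X - S / K" using True by (simp add: power2_eq_square field_simps)
    finally show ?thesis using True by (simp add: field_simps)
  next
    case False
    hence K: "K = 0" using K0 by simp
    hence "W = 0" using Wle2 W0 by simp
    show ?thesis
    proof (rule ccontr)
      assume "\<not> ?thesis"
      hence Sp: "S > 0" using K by simp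
      have "0 \<le> X - 2 * ((X + 1) / S) * S + ((X + 1) / S)\<^sup>2 * W" by (rule quad)
      with `W = 0` Sp X0 show False by simp
    qed
  qed
  thus ?thesis unfolding nX S_def c_def .
qed


lemma bridge:
  fixes ip :: "'v::ab_group_add \<Rightarrow> 'v \<Rightarrow> 'v \<Rightarrow> 'k::real_normed_field"
    and scale :: "'k \<Rightarrow> 'v \<Rightarrow> 'v" and cj :: "'k \<Rightarrow> 'k"
    and n :: nat and y :: "nat \<Rightarrow> 'v"
  assumes H: "is_2ip scale cj ip" and npos: "n > 0"
    and cj_add: "\<And>a b. cj (a + b) = cj a + cj b"
    and cj_mult: "\<And>a b. cj (a * b) = cj a * cj b"
    and cj_cj: "\<And>a. cj (cj a) = a"
    and cj_of_real: "\<And>r. cj (of_real r) = of_real r"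
    and cj_norm: "\<And>a. norm (cj a) = norm a"
    and mult_cj: "\<And>a. a * cj a = of_real ((norm a)\<^sup>2)"
  shows "(\<Sum>i=1..n. (norm (ip x (y i) z))\<^sup>2)
              \<le> (two_norm ip x z)\<^sup>2 *
                 (Max {(two_norm ip (y i) z)\<^sup>2 | i. i \<in> {1..n}}
                  + real (n - 1) * Max {norm (ip (y i) (y j) z) | i j. i \<in> {1..n} \<and> j \<in> {1..n} \<and> i \<noteq> j})"
proof -
  have ax: "\<And>x x' y. ip (x + x') y z = ip x y z + ip x' y z"
    "\<And>a x y. ip (scale a x) y z = a * ip x y z"
    "\<And>x y. ip y x z = cj (ip x y z)"
    "\<And>x. \<exists>r. r \<ge> 0 \<and> ip x x z = of_real r"
    using H unfolding is_2ip_def by blast+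
  have tn: "(two_norm ip u z)\<^sup>2 = norm (ip u u z)" for u
    unfolding two_norm_def by simp
  define M1 where "M1 = Max {(two_norm ip (y i) z)\<^sup>2 | i. i \<in> {1..n}}"
  define M2 where "M2 = Max {norm (ip (y i) (y j) z) | i j. i \<in> {1..n} \<and> j \<in> {1..n} \<and> i \<noteq> j}"
  have s1: "{(two_norm ip (y i) z)\<^sup>2 | i. i \<in> {1..n}} = (\<lambda>i. (two_norm ip (y i) z)\<^sup>2) ` {1..n}" by auto
  have s2: "{norm (ip (y i) (y j) z) | i j. i \<in> {1..n} \<and> j \<in> {1..n} \<and> i \<noteq> j}
     \<subseteq> (\<lambda>(i,j). norm (ip (y i) (y j) z)) ` ({1..n} \<times> {1..n})" by auto
  have f2: "finite {norm (ip (y i) (y j) z) | i j. i \<in> {1..n} \<and> j \<in> {1..n} \<and> i \<noteq> j}"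
    by (rule finite_subset[OF s2]) auto
  have hM1: "norm (ip (y i) (y i) z) \<le> M1" if "i \<in> {1..n}" for i
    unfolding M1_def s1 tn[symmetric] using that by (intro Max_ge) auto
  have hM2: "norm (ip (y i) (y j) z) \<le> M2" if "i \<in> {1..n}" "j \<in> {1..n}" "i \<noteq> j" for i j
    unfolding M2_def using that by (intro Max_ge[OF f2]) blast
  have M10: "M1 \<ge> 0" 
  proof -
    have "(1::nat) \<in> {1..n}" using npos by simp
    from order_trans[OF norm_ge_zero hM1[OF this]] show ?thesis .
  qed
  have M20: "real (n - 1) * M2 \<ge> 0"
  proof (cases "n \<ge> 2")
    case True
    hence i12: "(1::nat) \<in> {1..n}" "(2::nat) \<in> {1..n}" by auto
    have "M2 \<ge> 0" by (rule order_trans[OF norm_ge_zero hM2[OF i12]]) simp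
    thus ?thesis by simp
  next
    case False
    hence "n - 1 = 0" by simp
    thus ?thesis by simp
  qed
  have "(\<Sum>i\<in>{1..n}. (norm (ip x (y i) z))\<^sup>2) \<le> norm (ip x x z) * (M1 + real (card {1..n} - 1) * M2)"
  proof -
    have fin: "finite {1..n}" by simp
    have ne: "{1..n} \<noteq> {}" using npos by simp
    have K0: "0 \<le> M1 + real (card {1..n} - 1) * M2" using M10 M20 by simp
    show ?thesis
      by (rule generic[where p="\<lambda>u v. ip u v z" and scale=scale and cj=cj,
          OF ax(1) ax(2) ax(3) ax(4) cj_add cj_mult cj_cj cj_of_real cj_norm mult_cj fin ne hM1 hM2 refl K0])
  qed
  moreover have "card {1..n} = n" by simp
  ultimately show ?thesis by (simp only: M1_def[symmetric] M2_def[symmetric] tn[of x])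
qed

theorem mainTheorem3:
  shows "(\<forall>(scale :: real \<Rightarrow> 'a::ab_group_add \<Rightarrow> 'a) ip (n::nat) x (y :: nat \<Rightarrow> 'a) z.
            is_2ip scale id ip \<and> n > 0 \<longrightarrow>
            (\<Sum>i=1..n. (norm (ip x (y i) z))\<^sup>2)
              \<le> (two_norm ip x z)\<^sup>2 *
                 (Max {(two_norm ip (y i) z)\<^sup>2 | i. i \<in> {1..n}}
                  + real (n - 1) * Max {norm (ip (y i) (y j) z) | i j. i \<in> {1..n} \<and> j \<in> {1..n} \<and> i \<noteq> j}))
       \<and>
         (\<forall>(scale :: complex \<Rightarrow> 'b::ab_group_add \<Rightarrow> 'b) ip (n::nat) x (y :: nat \<Rightarrow> 'b) z.
            is_2ip scale cnj ip \<and> n > 0 \<longrightarrow>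
            (\<Sum>i=1..n. (norm (ip x (y i) z))\<^sup>2)
              \<le> (two_norm ip x z)\<^sup>2 *
                 (Max {(two_norm ip (y i) z)\<^sup>2 | i. i \<in> {1..n}}
                  + real (n - 1) * Max {norm (ip (y i) (y j) z) | i j. i \<in> {1..n} \<and> j \<in> {1..n} \<and> i \<noteq> j}))"
proof (intro conjI allI impI)
  fix scale :: "real \<Rightarrow> 'a::ab_group_add \<Rightarrow> 'a" and ip and n :: nat and x and y :: "nat \<Rightarrow> 'a" and z
  assume "is_2ip scale id ip \<and> n > 0"
  thus "(\<Sum>i=1..n. (norm (ip x (y i) z))\<^sup>2)
              \<le> (two_norm ip x z)\<^sup>2 *
                 (Max {(two_norm ip (y i) z)\<^sup>2 | i. i \<in> {1..n}}
                  + real (n - 1) * Max {norm (ip (y i) (y j) z) | i j. i \<in> {1..n} \<and> j \<in> {1..n} \<and> i \<noteq> j})"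
    by (intro bridge[where cj=id and scale=scale]) (auto simp: power2_eq_square)
next
  fix scale :: "complex \<Rightarrow> 'b::ab_group_add \<Rightarrow> 'b" and ip and n :: nat and x and y :: "nat \<Rightarrow> 'b" and z
  assume "is_2ip scale cnj ip \<and> n > 0"
  thus "(\<Sum>i=1..n. (norm (ip x (y i) z))\<^sup>2)
              \<le> (two_norm ip x z)\<^sup>2 *
                 (Max {(two_norm ip (y i) z)\<^sup>2 | i. i \<in> {1..n}}
                  + real (n - 1) * Max {norm (ip (y i) (y j) z) | i j. i \<in> {1..n} \<and> j \<in> {1..n} \<and> i \<noteq> j})"
    by (intro bridge[where cj=cnj and scale=scale]) (auto simp: complex_norm_square[symmetric])
qed

end
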